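(* Let $N\ge3$ and $p\in(0,2)$. There exists $C>0$ such that $$\langle L_-W,W\rangle_{L^2(\Gamma)}\ge C\|W\|_{H^1(\Gamma)}^2\quad\text{for every } W\in H^1_\Gamma\cap(L^2_c)^*,$$ where $(L^2_c)^*=\{W\in L^2(\Gamma):\langle W,\partial_\omega\Phi_\omega|_{\omega=1}\rangle_{L^2(\Gamma)}=0\}$.
   Context: Let $\Gamma$ be the star graph of $N$ half-lines joined at a single vertex, each edge parametrized by $x\in[0,\infty)$ with vertex at $x=0$. Functions are real-valued vectors $W=(w_1,\dots,w_N)^T$; $L^2(\Gamma)=\oplus_{j=1}^NL^2(\mathbb{R}^+)$ with $\langle F,G\rangle_{L^2(\Gamma)}=\sum_j\int_0^\infty f_jg_j\,dx$, $H^1(\Gamma)=\oplus_jH^1(\mathbb{R}^+)$, $H^1_\Gamma=\{W\in H^1(\Gamma):w_1(0)=\dots=w_N(0)\}$. Let $\phi(x)=\operatorname{sech}^{1/p}(px)$, $\Phi=\phi\,(1,\dots,1)^T$, and for $\omega>0$ let $\Phi_\omega(x)=\omega^{1/(2p)}\Phi(\omega^{1/2}x)$. The quadratic form of $L_-$ is $\langle L_-W,W\rangle_{L^2(\Gamma)}=\sum_{j=1}^N\int_0^\infty\big[(w_j')^2+w_j^2-(p+1)\phi^{2p}w_j^2\big]dx$ for $W\in H^1_\Gamma$. *)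

theory Defs
  imports "HOL-Analysis.Analysis"
begin

text \<open>Functions on the half-line [0,\<infinity>) are real functions of which only the
values on {0..} matter.  A function on the star graph with N edges is
W :: nat \<Rightarrow> real \<Rightarrow> real, edge j < N being W j.\<close>

definition L2_halfline :: "(real \<Rightarrow> real) \<Rightarrow> bool" where
  "L2_halfline f \<longleftrightarrow> set_borel_measurable lborel {0..} f \<and>
     set_integrable lborel {0..} (\<lambda>x. (f x)\<^sup>2)"

text \<open>f \<in> H^1(R^+) with (weak) derivative g: f and g are in L^2(0,\<infinity>), g is
locally integrable and f is its absolutely continuous primitive on [0,\<infinity>)
(f is the continuous representative).\<close>
definition H1_halfline_deriv :: "(real \<Rightarrow> real) \<Rightarrow> (real \<Rightarrow> real) \<Rightarrow> bool" where
  "H1_halfline_deriv f g \<longleftrightarrow> L2_halfline f \<and> L2_halfline g \<and>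
     (\<forall>x\<ge>0. set_integrable lborel {0..x} g \<and>
             f x = f 0 + (\<integral>t\<in>{0..x}. g t \<partial>lborel))"

definition phi :: "real \<Rightarrow> real \<Rightarrow> real" where
  "phi p x = (1 / cosh (p * x)) powr (1 / p)"

definition Phi_omega :: "real \<Rightarrow> real \<Rightarrow> real \<Rightarrow> real" where
  "Phi_omega p \<omega> x = \<omega> powr (1 / (2 * p)) * phi p (sqrt \<omega> * x)"

text \<open>Component of \<partial>_\<omega> \<Phi>_\<omega> at \<omega> = 1 (same on every edge).\<close>
definition dPhi :: "real \<Rightarrow> real \<Rightarrow> real" where
  "dPhi p x = deriv (\<lambda>\<omega>. Phi_omega p \<omega> x) 1"

definition L2_inner :: "nat \<Rightarrow> (nat \<Rightarrow> real \<Rightarrow> real) \<Rightarrow> (nat \<Rightarrow> real \<Rightarrow> real) \<Rightarrow> real" where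
  "L2_inner N F G = (\<Sum>j<N. \<integral>x\<in>{0..}. F j x * G j x \<partial>lborel)"

definition H1_Gamma_deriv :: "nat \<Rightarrow> (nat \<Rightarrow> real \<Rightarrow> real) \<Rightarrow> (nat \<Rightarrow> real \<Rightarrow> real) \<Rightarrow> bool" where
  "H1_Gamma_deriv N W W' \<longleftrightarrow> (\<forall>j<N. H1_halfline_deriv (W j) (W' j)) \<and>
     (\<forall>j<N. \<forall>k<N. W j 0 = W k 0)"

definition H1_norm_sq :: "nat \<Rightarrow> (nat \<Rightarrow> real \<Rightarrow> real) \<Rightarrow> (nat \<Rightarrow> real \<Rightarrow> real) \<Rightarrow> real" where
  "H1_norm_sq N W W' = (\<Sum>j<N. \<integral>x\<in>{0..}. (W' j x)\<^sup>2 + (W j x)\<^sup>2 \<partial>lborel)"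

definition Lminus_form :: "real \<Rightarrow> nat \<Rightarrow> (nat \<Rightarrow> real \<Rightarrow> real) \<Rightarrow> (nat \<Rightarrow> real \<Rightarrow> real) \<Rightarrow> real" where
  "Lminus_form p N W W' = (\<Sum>j<N. \<integral>x\<in>{0..}.
      (W' j x)\<^sup>2 + (W j x)\<^sup>2 - (p + 1) * (phi p x) powr (2 * p) * (W j x)\<^sup>2 \<partial>lborel)"

end

theory Submission
  imports Defs
begin


lemma prod_integrable:
  fixes F G :: "real \<Rightarrow> real"
  assumes F: "integrable lborel F" and G: "integrable lborel G"
  shows "integrable (lborel \<Otimes>\<^sub>M lborel) (\<lambda>(s,t). F s * G t)"
proof (rule lborel_pair.Fubini_integrable)
  have [measurable]: "F \<in> borel_measurable lborel" "G \<in> borel_measurable lborel"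
    using F G by auto
  show "(\<lambda>(s,t). F s * G t) \<in> borel_measurable (lborel \<Otimes>\<^sub>M lborel)"
    by measurable
  have "integrable lborel (\<lambda>s. \<bar>F s\<bar> * (\<integral>t. \<bar>G t\<bar> \<partial>lborel))"
    using F by (intro integrable_mult_left integrable_abs)
  then show "integrable lborel (\<lambda>s. \<integral>t. norm ((\<lambda>(s,t). F s * G t) (s, t)) \<partial>lborel)"
    by (simp add: abs_mult)
  show "AE s in lborel. integrable lborel (\<lambda>t. (\<lambda>(s,t). F s * G t) (s, t))"
    using G by auto
qed

lemma fubini_tri:
  fixes f g :: "real \<Rightarrow> real"
  assumes f: "set_integrable lborel {0..X} f" and g: "set_integrable lborel {0..X} g"
  shows "set_integrable lborel {0..X} (\<lambda>s. f s * (LINT t:{0..s}|lborel. g t))"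
    and "(LINT s:{0..X}|lborel. f s * (LINT t:{0..s}|lborel. g t)) =
         (LINT t:{0..X}|lborel. g t * (LINT s:{t..X}|lborel. f s))"
proof -
  define F1 where "F1 s = indicator {0..X} s * f s" for s
  define G1 where "G1 t = indicator {0..X} t * g t" for t
  define T where "T = {(s::real,t::real). t \<le> s}"
  define k where "k s t = indicator T (s,t) * (F1 s * G1 t)" for s t
  have F1: "integrable lborel F1" using f unfolding F1_def set_integrable_def by simp
  have G1: "integrable lborel G1" using g unfolding G1_def set_integrable_def by simp
  have Tm: "T \<in> sets (lborel \<Otimes>\<^sub>M lborel)"
  proof -
    have "{x::real\<times>real \<in> space (lborel \<Otimes>\<^sub>M lborel). snd x \<le> fst x} \<in> sets (lborel \<Otimes>\<^sub>M lborel)"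
      using borel_measurable_le[of snd "lborel \<Otimes>\<^sub>M lborel" fst] by simp
    moreover have "{x::real\<times>real \<in> space (lborel \<Otimes>\<^sub>M lborel). snd x \<le> fst x} = T"
      unfolding T_def by (auto simp: space_pair_measure)
    ultimately show ?thesis by simp
  qed
  have ik: "integrable (lborel \<Otimes>\<^sub>M lborel) (case_prod k)"
  proof -
    have "integrable (lborel \<Otimes>\<^sub>M lborel) (\<lambda>x. indicator T x *\<^sub>R (\<lambda>(s,t). F1 s * G1 t) x)"
      by (rule integrable_mult_indicator[OF Tm prod_integrable[OF F1 G1]])
    then show ?thesis unfolding k_def by (simp add: case_prod_beta')
  qed
  have k1: "k s t = F1 s * (indicator {0..s} t * g t)" for s t
    unfolding k_def F1_def G1_def T_def by (auto simp: indicator_def)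
  have k2: "k s t = G1 t * (indicator {t..X} s * f s)" for s t
    unfolding k_def F1_def G1_def T_def by (auto simp: indicator_def)
  have e1: "(\<integral>t. k s t \<partial>lborel) = indicator {0..X} s * (f s * (LINT t:{0..s}|lborel. g t))" for s
    unfolding k1 F1_def set_lebesgue_integral_def by simp
  have e2: "(\<integral>s. k s t \<partial>lborel) = indicator {0..X} t * (g t * (LINT s:{t..X}|lborel. f s))" for t
    unfolding k2 G1_def set_lebesgue_integral_def by simp
  show "set_integrable lborel {0..X} (\<lambda>s. f s * (LINT t:{0..s}|lborel. g t))"
    using lborel_pair.integrable_fst[OF ik] unfolding e1 set_integrable_def by simp
  show "(LINT s:{0..X}|lborel. f s * (LINT t:{0..s}|lborel. g t)) =
         (LINT t:{0..X}|lborel. g t * (LINT s:{t..X}|lborel. f s))"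
    using lborel_pair.Fubini_integral[OF ik] unfolding e1 e2 set_lebesgue_integral_def by simp
qed



definition AC :: "(real \<Rightarrow> real) \<Rightarrow> (real \<Rightarrow> real) \<Rightarrow> bool" where
  "AC F f \<longleftrightarrow> (\<forall>x\<ge>0. set_integrable lborel {0..x} f \<and>
      F x = F 0 + (LINT t:{0..x}|lborel. f t))"

lemma AC_int: "AC F f \<Longrightarrow> 0 \<le> x \<Longrightarrow> set_integrable lborel {0..x} f"
  unfolding AC_def by blast

lemma AC_eq: "AC F f \<Longrightarrow> 0 \<le> x \<Longrightarrow> F x = F 0 + (LINT t:{0..x}|lborel. f t)"
  unfolding AC_def by blast

lemma set_integral_split:
  fixes f :: "real \<Rightarrow> real"
  assumes f: "set_integrable lborel {0..X} f" and t: "0 \<le> t" "t \<le> X"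
  shows "(LINT s:{t..X}|lborel. f s) = (LINT s:{0..X}|lborel. f s) - (LINT s:{0..t}|lborel. f s)"
proof -
  have i1: "set_integrable lborel {0..t} f"
    by (rule set_integrable_subset[OF f]) (use t in auto)
  have i2: "set_integrable lborel {t..X} f"
    by (rule set_integrable_subset[OF f]) (use t in auto)
  have "AE x in lborel. x \<noteq> t" by (rule AE_lborel_singleton)
  then have ae: "AE x in lborel. \<not> (x \<in> {0..t} \<and> x \<in> {t..X})"
    by eventually_elim auto
  have U: "(LINT s:{0..t}\<union>{t..X}|lborel. f s) = (LINT s:{0..t}|lborel. f s) + (LINT s:{t..X}|lborel. f s)"
    by (rule set_integral_Un_AE[OF ae _ _ i1 i2]) simp_all
  have eq: "{0..t}\<union>{t..X} = {0..X}" using t by auto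
  from U[unfolded eq] show ?thesis by linarith
qed

lemma si_cong: "set_integrable M A f \<Longrightarrow> (\<And>x. x \<in> A \<Longrightarrow> g x = f x) \<Longrightarrow> set_integrable M A g"
  using set_integrable_cong[of M M A A g f] by auto

lemma sli_cong: "A \<in> sets M \<Longrightarrow> (\<And>x. x \<in> A \<Longrightarrow> f x = g x) \<Longrightarrow> (LINT x:A|M. f x) = (LINT x:A|M. g x)"
  by (rule set_lebesgue_integral_cong) auto

lemma AC_mult:
  assumes F: "AC F f" and G: "AC G g"
  shows "AC (\<lambda>x. F x * G x) (\<lambda>x. f x * G x + F x * g x)"
  unfolding AC_def
proof (intro allI impI conjI)
  fix X :: real assume X: "0 \<le> X"
  define Fi where "Fi s = (LINT t:{0..s}|lborel. f t)" for s
  define Gi where "Gi s = (LINT t:{0..s}|lborel. g t)" for s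
  have fi: "set_integrable lborel {0..X} f" using AC_int[OF F X] .
  have gi: "set_integrable lborel {0..X} g" using AC_int[OF G X] .
  note A = fubini_tri[OF fi gi, folded Gi_def]
  note B = fubini_tri[OF gi fi, folded Fi_def]
  have FE: "F s = F 0 + Fi s" if "s \<in> {0..X}" for s
  proof -
    have "0 \<le> s" using that by simp
    then show ?thesis using AC_eq[OF F] unfolding Fi_def by blast
  qed
  have GE: "G s = G 0 + Gi s" if "s \<in> {0..X}" for s
  proof -
    have "0 \<le> s" using that by simp
    then show ?thesis using AC_eq[OF G] unfolding Gi_def by blast
  qed
  have fi0: "set_integrable lborel {0..X} (\<lambda>s. G 0 * f s)" using fi by simp
  have gi0: "set_integrable lborel {0..X} (\<lambda>s. F 0 * g s)" using gi by simp
  have gi1: "set_integrable lborel {0..X} (\<lambda>s. Fi X * g s)" using gi by simp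
  have i1': "set_integrable lborel {0..X} (\<lambda>s. G 0 * f s + f s * Gi s)"
    by (rule set_integral_add(1)[OF fi0 A(1)])
  have i1: "set_integrable lborel {0..X} (\<lambda>s. f s * G s)"
  proof (rule si_cong[OF i1'])
    fix s assume s: "s \<in> {0..X}"
    show "f s * G s = G 0 * f s + f s * Gi s" using GE[OF s] by (simp add: algebra_simps)
  qed
  have i2': "set_integrable lborel {0..X} (\<lambda>s. F 0 * g s + g s * Fi s)"
    by (rule set_integral_add(1)[OF gi0 B(1)])
  have i2: "set_integrable lborel {0..X} (\<lambda>s. F s * g s)"
  proof (rule si_cong[OF i2'])
    fix s assume s: "s \<in> {0..X}"
    show "F s * g s = F 0 * g s + g s * Fi s" using FE[OF s] by (simp add: algebra_simps)
  qed
  show "set_integrable lborel {0..X} (\<lambda>x. f x * G x + F x * g x)"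
    by (rule set_integral_add(1)[OF i1 i2])
  have eqA: "(LINT s:{0..X}|lborel. f s * Gi s) = (LINT t:{0..X}|lborel. g t * (Fi X - Fi t))"
    unfolding A(2)
  proof (rule sli_cong)
    fix t assume t: "t \<in> {0..X}"
    show "g t * set_lebesgue_integral lborel {t..X} f = g t * (Fi X - Fi t)"
      using set_integral_split[OF fi, of t] t unfolding Fi_def by simp
  qed simp
  have i3: "set_integrable lborel {0..X} (\<lambda>s. Fi X * g s - g s * Fi s)"
    by (rule set_integral_diff(1)[OF gi1 B(1)])
  have E4: "(LINT t:{0..X}|lborel. g t * (Fi X - Fi t)) = Fi X * Gi X - (LINT s:{0..X}|lborel. g s * Fi s)"
  proof -
    have "(LINT t:{0..X}|lborel. g t * (Fi X - Fi t)) = (LINT t:{0..X}|lborel. Fi X * g t - g t * Fi t)"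
      by (rule sli_cong) (simp_all add: algebra_simps)
    also have "\<dots> = (LINT t:{0..X}|lborel. Fi X * g t) - (LINT t:{0..X}|lborel. g t * Fi t)"
      by (rule set_integral_diff(2)[OF gi1 B(1)])
    also have "(LINT t:{0..X}|lborel. Fi X * g t) = Fi X * Gi X"
      unfolding Gi_def by (rule set_integral_mult_right)
    finally show ?thesis .
  qed
  have E1: "(LINT s:{0..X}|lborel. f s * G s + F s * g s) =
        (LINT s:{0..X}|lborel. G 0 * f s + f s * Gi s) + (LINT s:{0..X}|lborel. F 0 * g s + g s * Fi s)"
  proof -
    have "(LINT s:{0..X}|lborel. f s * G s + F s * g s) =
        (LINT s:{0..X}|lborel. (G 0 * f s + f s * Gi s) + (F 0 * g s + g s * Fi s))"
    proof (rule sli_cong)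
      fix s assume s: "s \<in> {0..X}"
      show "f s * G s + F s * g s = (G 0 * f s + f s * Gi s) + (F 0 * g s + g s * Fi s)"
        using FE[OF s] GE[OF s] by (simp add: algebra_simps)
    qed simp
    also have "\<dots> = (LINT s:{0..X}|lborel. G 0 * f s + f s * Gi s) + (LINT s:{0..X}|lborel. F 0 * g s + g s * Fi s)"
      by (rule set_integral_add(2)[OF i1' i2'])
    finally show ?thesis .
  qed
  have E2: "(LINT s:{0..X}|lborel. G 0 * f s + f s * Gi s) = G 0 * Fi X + (LINT s:{0..X}|lborel. f s * Gi s)"
  proof -
    have "(LINT s:{0..X}|lborel. G 0 * f s + f s * Gi s) = (LINT s:{0..X}|lborel. G 0 * f s) + (LINT s:{0..X}|lborel. f s * Gi s)"
      by (rule set_integral_add(2)[OF fi0 A(1)])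
    moreover have "(LINT s:{0..X}|lborel. G 0 * f s) = G 0 * Fi X"
      unfolding Fi_def by (rule set_integral_mult_right)
    ultimately show ?thesis by simp
  qed
  have E3: "(LINT s:{0..X}|lborel. F 0 * g s + g s * Fi s) = F 0 * Gi X + (LINT s:{0..X}|lborel. g s * Fi s)"
  proof -
    have "(LINT s:{0..X}|lborel. F 0 * g s + g s * Fi s) = (LINT s:{0..X}|lborel. F 0 * g s) + (LINT s:{0..X}|lborel. g s * Fi s)"
      by (rule set_integral_add(2)[OF gi0 B(1)])
    moreover have "(LINT s:{0..X}|lborel. F 0 * g s) = F 0 * Gi X"
      unfolding Gi_def by (rule set_integral_mult_right)
    ultimately show ?thesis by simp
  qed
  have FX: "F X = F 0 + Fi X" by (rule FE) (use X in simp)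
  have GX: "G X = G 0 + Gi X" by (rule GE) (use X in simp)
  show "F X * G X = F 0 * G 0 + (LINT t:{0..X}|lborel. f t * G t + F t * g t)"
    unfolding E1 E2 E3 eqA E4 FX GX by (simp add: algebra_simps)
qed

lemma AC_add:
  assumes F: "AC F f" and G: "AC G g"
  shows "AC (\<lambda>x. F x + G x) (\<lambda>x. f x + g x)"
  unfolding AC_def
proof (intro allI impI conjI)
  fix x :: real assume x: "0 \<le> x"
  note fi = AC_int[OF F x] and gi = AC_int[OF G x]
  show "set_integrable lborel {0..x} (\<lambda>t. f t + g t)" by (rule set_integral_add(1)[OF fi gi])
  show "F x + G x = F 0 + G 0 + (LINT t:{0..x}|lborel. f t + g t)"
    unfolding set_integral_add(2)[OF fi gi] using AC_eq[OF F x] AC_eq[OF G x] by linarith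
qed

lemma AC_diff:
  assumes F: "AC F f" and G: "AC G g"
  shows "AC (\<lambda>x. F x - G x) (\<lambda>x. f x - g x)"
  unfolding AC_def
proof (intro allI impI conjI)
  fix x :: real assume x: "0 \<le> x"
  note fi = AC_int[OF F x] and gi = AC_int[OF G x]
  show "set_integrable lborel {0..x} (\<lambda>t. f t - g t)" by (rule set_integral_diff(1)[OF fi gi])
  show "F x - G x = F 0 - G 0 + (LINT t:{0..x}|lborel. f t - g t)"
    unfolding set_integral_diff(2)[OF fi gi] using AC_eq[OF F x] AC_eq[OF G x] by linarith
qed

lemma AC_cmult:
  assumes F: "AC F f"
  shows "AC (\<lambda>x. c * F x) (\<lambda>x. c * f x)"
  unfolding AC_def
proof (intro allI impI conjI)
  fix x :: real assume x: "0 \<le> x"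
  note fi = AC_int[OF F x]
  show "set_integrable lborel {0..x} (\<lambda>t. c * f t)" using fi by simp
  have "c * F x = c * F 0 + c * (LINT t:{0..x}|lborel. f t)"
    using AC_eq[OF F x] by (simp add: algebra_simps)
  then show "c * F x = c * F 0 + (LINT t:{0..x}|lborel. c * f t)"
    by simp
qed

lemma AC_smooth:
  assumes D: "\<And>x. 0 \<le> x \<Longrightarrow> DERIV F x :> f x" and C: "\<And>x. 0 \<le> x \<Longrightarrow> isCont f x"
  shows "AC F f"
  unfolding AC_def
proof (intro allI impI conjI)
  fix x :: real assume x: "0 \<le> x"
  have "continuous_on {0..x} f"
    using C by (intro continuous_at_imp_continuous_on) auto
  then show "set_integrable lborel {0..x} f" by (rule borel_integrable_atLeastAtMost')
  have "(\<integral>t. f t * indicator {0..x} t \<partial>lborel) = F x - F 0"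
    by (rule integral_FTC_Icc_real) (use x D C in auto)
  then show "F x = F 0 + (LINT t:{0..x}|lborel. f t)"
    unfolding set_lebesgue_integral_def by (simp add: mult.commute)
qed

lemma AC_cong:
  assumes "AC F f" "\<And>x. 0 \<le> x \<Longrightarrow> g x = f x" "\<And>x. 0 \<le> x \<Longrightarrow> G x = F x"
  shows "AC G g"
  unfolding AC_def
proof (intro allI impI conjI)
  fix x :: real assume x: "0 \<le> x"
  show "set_integrable lborel {0..x} g"
    by (rule si_cong[OF AC_int[OF assms(1) x]]) (use assms(2) in auto)
  have "(LINT t:{0..x}|lborel. g t) = (LINT t:{0..x}|lborel. f t)"
    by (rule sli_cong) (use assms(2) in auto)
  then show "G x = G 0 + (LINT t:{0..x}|lborel. g t)"
    using AC_eq[OF assms(1) x] assms(3)[OF x] assms(3)[of 0] by simp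
qed



lemma phi_exp: "0 < p \<Longrightarrow> phi p x = exp (- ln (cosh (p * x)) / p)"
  unfolding phi_def powr_def by (simp add: ln_div)

lemma phi_pos: "0 < p \<Longrightarrow> 0 < phi p x"
  by (simp add: phi_exp)

lemma phi_0: "0 < p \<Longrightarrow> phi p 0 = 1"
  by (simp add: phi_exp)

lemma sech_sq: "1 - tanh (y::real) ^ 2 = 1 / cosh y ^ 2"
proof -
  have c: "cosh y \<noteq> 0" by (metis cosh_real_pos less_irrefl)
  have d: "cosh y ^ 2 \<noteq> 0" using c by simp
  have "1 - tanh y ^ 2 = (cosh y ^ 2 - sinh y ^ 2) / cosh y ^ 2"
    unfolding tanh_def using c by (simp add: field_simps power2_eq_square)
  then show ?thesis using cosh_square_eq[of y] by simp
qed

lemma phi_powr: "0 < p \<Longrightarrow> phi p x powr (2 * p) = 1 - tanh (p * x) ^ 2"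
proof -
  assume p: "0 < p"
  have "phi p x powr (2 * p) = exp (2 * p * (- ln (cosh (p * x)) / p))"
    using phi_pos[OF p, of x] unfolding powr_def by (simp add: phi_exp[OF p])
  also have "\<dots> = exp (- (2 * ln (cosh (p * x))))" using p by simp
  also have "\<dots> = 1 / cosh (p * x) ^ 2"
  proof -
    have "exp (2 * ln (cosh (p * x))) = exp (ln (cosh (p * x))) ^ 2"
      by (metis exp_of_nat_mult of_nat_numeral)
    then show ?thesis by (simp add: exp_minus divide_inverse)
  qed
  finally show ?thesis by (simp add: sech_sq)
qed

lemma phi_deriv: "0 < p \<Longrightarrow> DERIV (phi p) x :> - (tanh (p * x) * phi p x)"
proof -
  assume p: "0 < p"
  have "DERIV (\<lambda>x. exp (- ln (cosh (p * x)) / p)) x :>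
        exp (- ln (cosh (p * x)) / p) * (- (sinh (p * x) * p / cosh (p * x)) / p)"
    by (auto intro!: derivative_eq_intros simp: field_simps)
  moreover have "exp (- ln (cosh (p * x)) / p) * (- (sinh (p * x) * p / cosh (p * x)) / p) = - (tanh (p * x) * phi p x)"
    using p cosh_real_pos[of "p*x"] by (simp add: phi_exp tanh_def field_simps del: cosh_real_pos)
  moreover have "phi p = (\<lambda>x. exp (- ln (cosh (p * x)) / p))"
    by (rule ext) (simp add: phi_exp[OF p])
  ultimately show ?thesis by (simp add: ac_simps)
qed

lemma phi_isCont: "0 < p \<Longrightarrow> isCont (phi p) x"
  using phi_deriv DERIV_isCont by blast

lemma tanh_deriv: fixes p x :: real shows "DERIV (\<lambda>x. tanh (p * x)) x :> p * (1 - tanh (p * x) ^ 2)"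
proof -
  have c: "cosh (p * x) \<noteq> 0" using cosh_real_pos[of "p * x"] by linarith
  show ?thesis by (rule derivative_eq_intros refl c | simp)+
qed

lemma phi_bound: "0 < p \<Longrightarrow> 0 \<le> x \<Longrightarrow> phi p x \<le> exp (ln 2 / p) * exp (- x)"
proof -
  assume p: "0 < p" and x: "0 \<le> x"
  have "exp (p * x) / 2 \<le> cosh (p * x)" unfolding cosh_def by simp
  then have "ln (exp (p * x) / 2) \<le> ln (cosh (p * x))" by simp
  then have "p * x - ln 2 \<le> ln (cosh (p * x))" by (simp add: ln_div)
  then have "- ln (cosh (p * x)) / p \<le> (ln 2 - p * x) / p" using p by (simp add: field_simps)
  also have "\<dots> = ln 2 / p + - x" using p by (simp add: field_simps)
  finally show ?thesis by (simp add: phi_exp[OF p] exp_add[symmetric])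
qed

lemma dPhi_eq: "0 < p \<Longrightarrow> dPhi p x = phi p x / (2 * p) - x * tanh (p * x) * phi p x / 2"
proof -
  assume p: "0 < p"
  have s: "DERIV (\<lambda>w. sqrt w * x) 1 :> inverse (sqrt 1) / 2 * x"
    by (rule DERIV_cmult_right) (rule DERIV_real_sqrt, simp)
  have ph: "DERIV (\<lambda>w. phi p (sqrt w * x)) 1 :> - (tanh (p * (sqrt 1 * x)) * phi p (sqrt 1 * x)) * (inverse (sqrt 1) / 2 * x)"
    by (rule DERIV_chain2[OF phi_deriv[OF p] s])
  have pw: "DERIV (\<lambda>w. w powr (1 / (2 * p))) 1 :> (1 / (2 * p)) * 1 powr (1 / (2 * p) - 1)"
    by (rule has_real_derivative_powr) simp
  have "DERIV (\<lambda>w. w powr (1 / (2 * p)) * phi p (sqrt w * x)) 1 :>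
     (1 / (2 * p)) * 1 powr (1 / (2 * p) - 1) * phi p (sqrt 1 * x) +
     - (tanh (p * (sqrt 1 * x)) * phi p (sqrt 1 * x)) * (inverse (sqrt 1) / 2 * x) * 1 powr (1 / (2 * p))"
    by (rule DERIV_mult[OF pw ph])
  then have "DERIV (\<lambda>w. Phi_omega p w x) 1 :> phi p x / (2 * p) - x * tanh (p * x) * phi p x / 2"
    unfolding Phi_omega_def by (simp add: field_simps)
  then show ?thesis unfolding dPhi_def by (rule DERIV_imp_deriv)
qed



lemma exp_int: "set_integrable lborel {0..} (\<lambda>x::real. exp (- x))"
proof -
  have "(\<lambda>x::real. exp (- 1 * x)) integrable_on {0..}"
    by (rule integrable_on_exp_minus_to_infinity) simp
  then have "(\<lambda>x::real. exp (- x)) absolutely_integrable_on {0..}"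
    by (intro nonnegative_absolutely_integrable_1) auto
  then have "integrable lebesgue (\<lambda>x::real. indicator {0..} x *\<^sub>R exp (- x))"
    unfolding set_integrable_def .
  moreover have "(\<lambda>x::real. indicator {0..} x *\<^sub>R exp (- x)) \<in> borel_measurable lborel"
    by measurable
  ultimately show ?thesis
    unfolding set_integrable_def using integrable_completion by blast
qed

lemma sbm_of_int: "set_integrable M A f \<Longrightarrow> set_borel_measurable M A f"
  unfolding set_integrable_def set_borel_measurable_def by auto

lemma sbm_mult:
  fixes f g :: "'a \<Rightarrow> real"
  assumes "set_borel_measurable M A f" "set_borel_measurable M A g"
  shows "set_borel_measurable M A (\<lambda>x. f x * g x)"
proof -
  have "(\<lambda>x. (indicator A x *\<^sub>R f x) * (indicator A x *\<^sub>R g x)) \<in> borel_measurable M"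
    using assms unfolding set_borel_measurable_def by measurable
  moreover have "(\<lambda>x. (indicator A x *\<^sub>R f x) * (indicator A x *\<^sub>R g x)) = (\<lambda>x. indicator A x *\<^sub>R (f x * g x))"
    by (auto simp: indicator_def fun_eq_iff)
  ultimately show ?thesis unfolding set_borel_measurable_def by simp
qed

lemma sbm_add:
  fixes f g :: "'a \<Rightarrow> real"
  assumes "set_borel_measurable M A f" "set_borel_measurable M A g"
  shows "set_borel_measurable M A (\<lambda>x. f x + g x)"
proof -
  have "(\<lambda>x. (indicator A x *\<^sub>R f x) + (indicator A x *\<^sub>R g x)) \<in> borel_measurable M"
    using assms unfolding set_borel_measurable_def by measurable
  moreover have "(\<lambda>x. (indicator A x *\<^sub>R f x) + (indicator A x *\<^sub>R g x)) = (\<lambda>x. indicator A x *\<^sub>R (f x + g x))"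
    by (auto simp: indicator_def fun_eq_iff)
  ultimately show ?thesis unfolding set_borel_measurable_def by simp
qed

lemma sbm_cmult:
  fixes f :: "'a \<Rightarrow> real"
  assumes "set_borel_measurable M A f"
  shows "set_borel_measurable M A (\<lambda>x. c * f x)"
proof -
  have "(\<lambda>x. c * (indicator A x *\<^sub>R f x)) \<in> borel_measurable M"
    using assms unfolding set_borel_measurable_def by measurable
  moreover have "(\<lambda>x. c * (indicator A x *\<^sub>R f x)) = (\<lambda>x. indicator A x *\<^sub>R (c * f x))"
    by (auto simp: indicator_def fun_eq_iff)
  ultimately show ?thesis unfolding set_borel_measurable_def by simp
qed

lemma sbm_diff:
  fixes f g :: "'a \<Rightarrow> real"
  assumes "set_borel_measurable M A f" "set_borel_measurable M A g"
  shows "set_borel_measurable M A (\<lambda>x. f x - g x)"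
  using sbm_add[OF assms(1) sbm_cmult[OF assms(2), of "-1"]] by simp

lemma sbm_cont:
  fixes f :: "real \<Rightarrow> real"
  assumes "continuous_on UNIV f" and "A \<in> sets lborel"
  shows "set_borel_measurable lborel A f"
proof -
  have [measurable]: "f \<in> borel_measurable lborel"
    using assms(1) by (simp add: borel_measurable_continuous_onI)
  show ?thesis unfolding set_borel_measurable_def using assms(2) by measurable
qed

lemma si_bound:
  fixes f g :: "real \<Rightarrow> real"
  assumes "set_integrable lborel A g" "set_borel_measurable lborel A f"
    "\<And>x. x \<in> A \<Longrightarrow> \<bar>f x\<bar> \<le> g x"
  shows "set_integrable lborel A f"
proof (rule set_integrable_bound[OF assms(1,2)], rule AE_I2, rule impI)
  fix x assume "x \<in> A"
  then have "\<bar>f x\<bar> \<le> g x" using assms(3) by auto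
  then show "norm (f x) \<le> norm (g x)" by simp
qed

lemma L2_prod:
  fixes f g :: "real \<Rightarrow> real"
  assumes "L2_halfline f" "L2_halfline g"
  shows "set_integrable lborel {0..} (\<lambda>x. f x * g x)"
proof -
  have i: "set_integrable lborel {0..} (\<lambda>x. (f x)\<^sup>2 / 2 + (g x)\<^sup>2 / 2)"
    using assms unfolding L2_halfline_def by (intro set_integral_add) auto
  show ?thesis
  proof (rule si_bound[OF i])
    show "set_borel_measurable lborel {0..} (\<lambda>x. f x * g x)"
      using assms unfolding L2_halfline_def by (intro sbm_mult) auto
    fix x
    have "0 \<le> (\<bar>f x\<bar> - \<bar>g x\<bar>)\<^sup>2" by simp
    then show "\<bar>f x * g x\<bar> \<le> (f x)\<^sup>2 / 2 + (g x)\<^sup>2 / 2"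
      by (simp add: power2_eq_square abs_mult algebra_simps)
  qed
qed

lemma L2_add:
  fixes f g :: "real \<Rightarrow> real"
  assumes "L2_halfline f" "L2_halfline g"
  shows "L2_halfline (\<lambda>x. f x + g x)"
proof -
  have m: "set_borel_measurable lborel {0..} (\<lambda>x. f x + g x)"
    using assms unfolding L2_halfline_def by (intro sbm_add) auto
  have i: "set_integrable lborel {0..} (\<lambda>x. 2 * (f x)\<^sup>2 + 2 * (g x)\<^sup>2)"
    using assms unfolding L2_halfline_def by (intro set_integral_add) auto
  have "set_integrable lborel {0..} (\<lambda>x. (f x + g x)\<^sup>2)"
  proof (rule si_bound[OF i])
    show "set_borel_measurable lborel {0..} (\<lambda>x. (f x + g x)\<^sup>2)"
      unfolding power2_eq_square by (intro sbm_mult m)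
    fix x
    have "0 \<le> (f x - g x)\<^sup>2" by simp
    then have "(f x + g x)\<^sup>2 \<le> 2 * (f x)\<^sup>2 + 2 * (g x)\<^sup>2"
      by (simp add: power2_eq_square algebra_simps)
    then show "\<bar>(f x + g x)\<^sup>2\<bar> \<le> 2 * (f x)\<^sup>2 + 2 * (g x)\<^sup>2" by simp
  qed
  then show ?thesis using m unfolding L2_halfline_def by simp
qed

lemma L2_mult_bounded:
  fixes f h :: "real \<Rightarrow> real"
  assumes "L2_halfline f" "continuous_on UNIV h" "\<And>x. 0 \<le> x \<Longrightarrow> \<bar>h x\<bar> \<le> B"
  shows "L2_halfline (\<lambda>x. h x * f x)"
proof -
  have m: "set_borel_measurable lborel {0..} (\<lambda>x. h x * f x)"
    using assms sbm_mult[OF sbm_cont[OF assms(2)], of "{0..}" f] unfolding L2_halfline_def by auto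
  have i: "set_integrable lborel {0..} (\<lambda>x. B\<^sup>2 * (f x)\<^sup>2)"
    using assms unfolding L2_halfline_def by auto
  have "set_integrable lborel {0..} (\<lambda>x. (h x * f x)\<^sup>2)"
  proof (rule si_bound[OF i])
    show "set_borel_measurable lborel {0..} (\<lambda>x. (h x * f x)\<^sup>2)"
      unfolding power2_eq_square by (intro sbm_mult m)
    fix x :: real assume x: "x \<in> {0..}"
    have "\<bar>h x\<bar>\<^sup>2 \<le> B\<^sup>2" using assms(3)[of x] x
      by (intro power_mono) auto
    then have "(h x)\<^sup>2 * (f x)\<^sup>2 \<le> B\<^sup>2 * (f x)\<^sup>2" by (intro mult_right_mono) auto
    then show "\<bar>(h x * f x)\<^sup>2\<bar> \<le> B\<^sup>2 * (f x)\<^sup>2"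
      by (simp add: power_mult_distrib)
  qed
  then show ?thesis using m unfolding L2_halfline_def by simp
qed

lemma L2_cmult:
  fixes f :: "real \<Rightarrow> real"
  assumes "L2_halfline f"
  shows "L2_halfline (\<lambda>x. c * f x)"
  using L2_mult_bounded[OF assms, of "\<lambda>x. c" "\<bar>c\<bar>"] by simp

lemma L2_diff:
  fixes f g :: "real \<Rightarrow> real"
  assumes "L2_halfline f" "L2_halfline g"
  shows "L2_halfline (\<lambda>x. f x - g x)"
  using L2_add[OF assms(1) L2_cmult[OF assms(2), of "-1"]] by simp



lemma set_integral_subset_mono:
  fixes f :: "real \<Rightarrow> real"
  assumes "set_integrable lborel A f" "B \<in> sets lborel" "B \<subseteq> A" "\<And>x. x \<in> A \<Longrightarrow> 0 \<le> f x"
  shows "(LINT x:B|lborel. f x) \<le> (LINT x:A|lborel. f x)"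
proof -
  have iB: "set_integrable lborel B f" by (rule set_integrable_subset[OF assms(1-3)])
  show ?thesis
    using iB assms(1) unfolding set_integrable_def set_lebesgue_integral_def
  proof (intro integral_mono)
    fix x show "indicator B x *\<^sub>R f x \<le> indicator A x *\<^sub>R f x"
      using assms(3) assms(4)[of x] by (auto simp: indicator_def)
  qed
qed

lemma const_interval_integral:
  assumes "a \<le> b"
  shows "(LINT x:{a..b}|lborel. (c::real)) = c * (b - a)"
  using assms by (simp add: set_integral_const)

lemma lim_zero:
  fixes f :: "real \<Rightarrow> real"
  assumes I: "set_integrable lborel {0..} f" and nn: "\<And>x. 0 \<le> x \<Longrightarrow> 0 \<le> f x"
    and lim: "(f \<longlongrightarrow> L) at_top"
  shows "L = 0"
proof (rule ccontr)
  assume "L \<noteq> 0"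
  have "L \<ge> 0"
    by (rule tendsto_lowerbound[OF lim]) (auto simp: eventually_at_top_linorder intro!: exI[of _ 0] nn)
  with \<open>L \<noteq> 0\<close> have L: "L > 0" by simp
  have "\<forall>\<^sub>F x in at_top. f x > L / 2"
    using order_tendstoD(1)[OF lim, of "L/2"] L by simp
  then obtain X1 where X1: "\<And>x. x \<ge> X1 \<Longrightarrow> f x > L / 2"
    unfolding eventually_at_top_linorder by blast
  define X0 where "X0 = max X1 0"
  define J where "J = (LINT x:{0..}|lborel. f x)"
  define X where "X = X0 + 2 * (\<bar>J\<bar> + 1) / L"
  have X0: "0 \<le> X0" "X1 \<le> X0" unfolding X0_def by auto
  have XX: "X0 \<le> X" unfolding X_def using L by simp
  have iX: "set_integrable lborel {X0..X} f"
    by (rule set_integrable_subset[OF I]) (use X0 in auto)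
  have "(LINT x:{X0..X}|lborel. L / 2) \<le> (LINT x:{X0..X}|lborel. f x)"
  proof (rule set_integral_mono[OF _ iX])
    show "set_integrable lborel {X0..X} (\<lambda>x. L / 2)"
      by (rule borel_integrable_atLeastAtMost') simp
    fix x assume "x \<in> {X0..X}"
    then show "L / 2 \<le> f x" using X1[of x] X0 by auto
  qed
  also have "\<dots> \<le> J"
    unfolding J_def by (rule set_integral_subset_mono[OF I]) (use X0 nn in auto)
  finally have "L / 2 * (X - X0) \<le> J" using const_interval_integral[OF XX] by simp
  moreover have "L / 2 * (X - X0) = \<bar>J\<bar> + 1" unfolding X_def using L by simp
  ultimately show False by simp
qed

lemma L1_mult_bounded:
  fixes f h :: "real \<Rightarrow> real"
  assumes f: "set_integrable lborel {0..} f" and h: "continuous_on UNIV h" and B: "\<And>x. 0 \<le> x \<Longrightarrow> \<bar>h x\<bar> \<le> B"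
  shows "set_integrable lborel {0..} (\<lambda>x. h x * f x)"
proof (rule si_bound)
  show "set_integrable lborel {0..} (\<lambda>x. B * \<bar>f x\<bar>)"
    using set_integrable_abs[OF f] by simp
  show "set_borel_measurable lborel {0..} (\<lambda>x. h x * f x)"
    by (rule sbm_mult[OF sbm_cont[OF h] sbm_of_int[OF f]]) simp
  fix x :: real assume x: "x \<in> {0..}"
  have "\<bar>h x\<bar> * \<bar>f x\<bar> \<le> B * \<bar>f x\<bar>" using B[of x] x by (intro mult_right_mono) auto
  then show "\<bar>h x * f x\<bar> \<le> B * \<bar>f x\<bar>" by (simp add: abs_mult)
qed

lemma H1_AC: "H1_halfline_deriv w g \<Longrightarrow> AC w g"
  unfolding H1_halfline_deriv_def AC_def by blast

lemma tanh_cont: "continuous_on UNIV (\<lambda>x::real. tanh (p * x))"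
  by (intro continuous_intros) (metis cosh_real_pos less_irrefl)

lemma tanh_abs: "\<bar>tanh (y::real)\<bar> \<le> 1"
  using tanh_real_bounds[of y] by auto

lemma sech_cont: "continuous_on UNIV (\<lambda>x::real. 1 - tanh (p * x) ^ 2)"
  by (intro continuous_intros tanh_cont)

lemma sech_abs: "\<bar>1 - tanh (y::real) ^ 2\<bar> \<le> 1"
proof -
  have "tanh y ^ 2 \<le> 1" using tanh_abs[of y] by (simp add: abs_square_le_1)
  then show ?thesis by simp
qed

lemma tanh_tendsto: "0 < p \<Longrightarrow> ((\<lambda>x::real. tanh (p * x)) \<longlongrightarrow> 1) at_top"
proof -
  assume p: "0 < p"
  have "filterlim (\<lambda>x::real. p * x) at_top at_top"
    using p by (intro filterlim_tendsto_pos_mult_at_top[OF tendsto_const]) (auto simp: filterlim_ident)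
  then show ?thesis by (rule filterlim_compose[OF tanh_real_at_top])
qed

lemma edge_identity:
  assumes p: "0 < p" and H: "H1_halfline_deriv w g"
  shows "set_integrable lborel {0..} (\<lambda>x. (g x)\<^sup>2 + (w x)\<^sup>2 - (p + 1) * phi p x powr (2 * p) * (w x)\<^sup>2)"
    and "L2_halfline (\<lambda>x. g x + tanh (p * x) * w x)"
    and "(LINT x:{0..}|lborel. (g x)\<^sup>2 + (w x)\<^sup>2 - (p + 1) * phi p x powr (2 * p) * (w x)\<^sup>2) =
         (LINT x:{0..}|lborel. (g x + tanh (p * x) * w x)\<^sup>2)"
proof -
  have Lw: "L2_halfline w" and Lg: "L2_halfline g" using H unfolding H1_halfline_deriv_def by auto
  have Ltw: "L2_halfline (\<lambda>x. tanh (p * x) * w x)"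
    by (rule L2_mult_bounded[OF Lw tanh_cont]) (rule tanh_abs)
  show Lu: "L2_halfline (\<lambda>x. g x + tanh (p * x) * w x)" by (rule L2_add[OF Lg Ltw])
  have iw: "set_integrable lborel {0..} (\<lambda>x. (w x)\<^sup>2)" using Lw unfolding L2_halfline_def by simp
  have ig: "set_integrable lborel {0..} (\<lambda>x. (g x)\<^sup>2)" using Lg unfolding L2_halfline_def by simp
  have iSw: "set_integrable lborel {0..} (\<lambda>x. (1 - tanh (p * x) ^ 2) * (w x)\<^sup>2)"
    by (rule L1_mult_bounded[OF iw sech_cont]) (rule sech_abs)
  have itwg: "set_integrable lborel {0..} (\<lambda>x. tanh (p * x) * w x * g x)"
    by (rule L2_prod[OF Ltw Lg])
  define h where "h x = p * ((1 - tanh (p * x) ^ 2) * (w x)\<^sup>2) + 2 * (tanh (p * x) * w x * g x)" for x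
  have ih: "set_integrable lborel {0..} h"
    unfolding h_def using iSw itwg by (intro set_integral_add(1)) auto
  define Q where "Q x = (g x)\<^sup>2 + (w x)\<^sup>2 - (p + 1) * ((1 - tanh (p * x) ^ 2) * (w x)\<^sup>2)" for x
  have iQ: "set_integrable lborel {0..} Q"
    unfolding Q_def using ig iw iSw by (intro set_integral_add(1) set_integral_diff(1)) auto
  have Qeq: "Q x = (g x)\<^sup>2 + (w x)\<^sup>2 - (p + 1) * phi p x powr (2 * p) * (w x)\<^sup>2" for x
    unfolding Q_def phi_powr[OF p] by simp
  show "set_integrable lborel {0..} (\<lambda>x. (g x)\<^sup>2 + (w x)\<^sup>2 - (p + 1) * phi p x powr (2 * p) * (w x)\<^sup>2)"
    using iQ unfolding Qeq .
  have Aw: "AC w g" by (rule H1_AC[OF H])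
  have At: "AC (\<lambda>x. tanh (p * x)) (\<lambda>x. p * (1 - tanh (p * x) ^ 2))"
    by (rule AC_smooth[OF tanh_deriv]) (intro continuous_intros, metis cosh_real_pos less_irrefl)
  have A: "AC (\<lambda>x. tanh (p * x) * (w x * w x))
    (\<lambda>x. p * (1 - tanh (p * x) ^ 2) * (w x * w x) + tanh (p * x) * (g x * w x + w x * g x))"
    by (rule AC_mult[OF At AC_mult[OF Aw Aw]])
  have Bd: "tanh (p * X) * (w X)\<^sup>2 = (LINT x:{0..X}|lborel. h x)" if X: "0 \<le> X" for X
  proof -
    have "tanh (p * X) * (w X * w X) = tanh (p * 0) * (w 0 * w 0) +
      (LINT x:{0..X}|lborel. p * (1 - tanh (p * x) ^ 2) * (w x * w x) + tanh (p * x) * (g x * w x + w x * g x))"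
      by (rule AC_eq[OF A X])
    also have "(LINT x:{0..X}|lborel. p * (1 - tanh (p * x) ^ 2) * (w x * w x) + tanh (p * x) * (g x * w x + w x * g x))
       = (LINT x:{0..X}|lborel. h x)"
      by (rule sli_cong) (auto simp: h_def power2_eq_square algebra_simps)
    finally show ?thesis by (simp add: power2_eq_square)
  qed
  have lim1: "((\<lambda>X. LINT x:{0..X}|lborel. h x) \<longlongrightarrow> (LINT x:{0..}|lborel. h x)) at_top"
    by (rule tendsto_set_lebesgue_integral_at_top[OF _ ih]) simp
  have lim2: "((\<lambda>X. tanh (p * X) * (w X)\<^sup>2) \<longlongrightarrow> (LINT x:{0..}|lborel. h x)) at_top"
  proof (rule Lim_transform_eventually[OF lim1])
    show "\<forall>\<^sub>F X in at_top. (LINT x:{0..X}|lborel. h x) = tanh (p * X) * (w X)\<^sup>2"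
      unfolding eventually_at_top_linorder by (rule exI[of _ 0]) (simp add: Bd)
  qed
  have lim3: "((\<lambda>X. (tanh (p * X) * (w X)\<^sup>2) / tanh (p * X)) \<longlongrightarrow> (LINT x:{0..}|lborel. h x) / 1) at_top"
    by (rule tendsto_divide[OF lim2 tanh_tendsto[OF p]]) simp
  have lim3': "((\<lambda>X. (tanh (p * X) * (w X)\<^sup>2) / tanh (p * X)) \<longlongrightarrow> (LINT x:{0..}|lborel. h x)) at_top"
    using lim3 by (simp only: div_by_1)
  have lim4: "((\<lambda>X. (w X)\<^sup>2) \<longlongrightarrow> (LINT x:{0..}|lborel. h x)) at_top"
  proof (rule Lim_transform_eventually[OF lim3'])
    show "\<forall>\<^sub>F X in at_top. (tanh (p * X) * (w X)\<^sup>2) / tanh (p * X) = (w X)\<^sup>2"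
      unfolding eventually_at_top_linorder using p by (intro exI[of _ 1]) auto
  qed
  have h0: "(LINT x:{0..}|lborel. h x) = 0"
    by (rule lim_zero[OF iw _ lim4]) simp
  have "(LINT x:{0..}|lborel. (g x + tanh (p * x) * w x)\<^sup>2) = (LINT x:{0..}|lborel. Q x + h x)"
    by (rule sli_cong) (auto simp: Q_def h_def power2_eq_square algebra_simps)
  also have "\<dots> = (LINT x:{0..}|lborel. Q x) + (LINT x:{0..}|lborel. h x)"
    by (rule set_integral_add(2)[OF iQ ih])
  finally show "(LINT x:{0..}|lborel. (g x)\<^sup>2 + (w x)\<^sup>2 - (p + 1) * phi p x powr (2 * p) * (w x)\<^sup>2) =
         (LINT x:{0..}|lborel. (g x + tanh (p * x) * w x)\<^sup>2)"
    using h0 unfolding Qeq by simp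
qed



lemma amgm: "0 < (e::real) \<Longrightarrow> 2 * a * b \<le> e * a\<^sup>2 + b\<^sup>2 / e"
proof -
  assume e: "0 < e"
  have "0 \<le> (e * a - b)\<^sup>2 / e" using e by simp
  also have "(e * a - b)\<^sup>2 / e = e * a\<^sup>2 + b\<^sup>2 / e - 2 * a * b"
    using e by (simp add: power2_eq_square field_simps)
  finally show ?thesis by simp
qed

lemma energy:
  fixes r k u :: "real \<Rightarrow> real"
  assumes p: "0 < p" and Ar: "AC r k" and r0: "r 0 = 0"
    and Lr: "L2_halfline r" and Lu: "L2_halfline u"
    and ku: "\<And>x. 0 \<le> x \<Longrightarrow> k x = u x - tanh (p * x) * r x"
  shows "(LINT x:{0..}|lborel. (r x)\<^sup>2) \<le> 4 * (1 / p + 1 / (2 * tanh 1))\<^sup>2 * (LINT x:{0..}|lborel. (u x)\<^sup>2)"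
proof -
  define M where "M = 1 / p + 1 / (2 * tanh 1)"
  have T1: "0 < tanh (1::real)" by simp
  have M: "0 < M" unfolding M_def using p T1 by (simp add: add_pos_pos)
  define e where "e = 1 / (2 * M)"
  have e: "0 < e" unfolding e_def using M by simp
  define R where "R = (LINT x:{0..}|lborel. (r x)\<^sup>2)"
  define U where "U = (LINT x:{0..}|lborel. (u x)\<^sup>2)"
  define B where "B = e * R + U / e"
  have ir: "set_integrable lborel {0..} (\<lambda>x. (r x)\<^sup>2)" using Lr unfolding L2_halfline_def by simp
  have iu: "set_integrable lborel {0..} (\<lambda>x. (u x)\<^sup>2)" using Lu unfolding L2_halfline_def by simp
  have iru: "set_integrable lborel {0..} (\<lambda>x. r x * u x)" by (rule L2_prod[OF Lr Lu])
  have itr: "set_integrable lborel {0..} (\<lambda>x. tanh (p * x) * (r x)\<^sup>2)"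
    by (rule L1_mult_bounded[OF ir tanh_cont]) (rule tanh_abs)
  have iB: "set_integrable lborel {0..} (\<lambda>x. e * (r x)\<^sup>2 + (u x)\<^sup>2 / e)"
    using ir iu by (intro set_integral_add(1)) auto
  have intB: "(LINT x:{0..}|lborel. e * (r x)\<^sup>2 + (u x)\<^sup>2 / e) = B"
    unfolding B_def R_def U_def using ir iu by (simp add: set_integral_add(2))
  have sub: "set_integrable lborel {0..x} f" if "set_integrable lborel {0..} (f::real\<Rightarrow>real)" "0 \<le> (x::real)" for f x
    by (rule set_integrable_subset[OF that(1)]) auto
  have rr: "(r x)\<^sup>2 = (LINT y:{0..x}|lborel. 2 * (r y * u y) - 2 * (tanh (p * y) * (r y)\<^sup>2))"
    if x: "0 \<le> x" for x
  proof -
    have "r x * r x = r 0 * r 0 + (LINT y:{0..x}|lborel. k y * r y + r y * k y)"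
      by (rule AC_eq[OF AC_mult[OF Ar Ar] x])
    also have "(LINT y:{0..x}|lborel. k y * r y + r y * k y) =
       (LINT y:{0..x}|lborel. 2 * (r y * u y) - 2 * (tanh (p * y) * (r y)\<^sup>2))"
    proof (rule sli_cong)
      fix y assume "y \<in> {0..x}"
      then have kk: "k y = u y - tanh (p * y) * r y" using ku by auto
      show "k y * r y + r y * k y = 2 * (r y * u y) - 2 * (tanh (p * y) * (r y)\<^sup>2)"
        unfolding kk by (simp add: power2_eq_square algebra_simps)
    qed simp
    finally show ?thesis using r0 by (simp add: power2_eq_square)
  qed
  have b1: "(LINT y:{0..x}|lborel. 2 * (r y * u y)) \<le> B" if x: "0 \<le> x" for x
  proof -
    have "(LINT y:{0..x}|lborel. 2 * (r y * u y)) \<le> (LINT y:{0..x}|lborel. e * (r y)\<^sup>2 + (u y)\<^sup>2 / e)"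
    proof (rule set_integral_mono)
      show "set_integrable lborel {0..x} (\<lambda>y. 2 * (r y * u y))" using sub[OF iru x] by simp
      show "set_integrable lborel {0..x} (\<lambda>y. e * (r y)\<^sup>2 + (u y)\<^sup>2 / e)" by (rule sub[OF iB x])
      fix y show "2 * (r y * u y) \<le> e * (r y)\<^sup>2 + (u y)\<^sup>2 / e" using amgm[OF e, of "r y" "u y"] by simp
    qed
    also have "\<dots> \<le> (LINT y:{0..}|lborel. e * (r y)\<^sup>2 + (u y)\<^sup>2 / e)"
      by (rule set_integral_subset_mono[OF iB]) (use e in auto)
    finally show ?thesis using intB by simp
  qed
  have b2: "(LINT y:{0..x}|lborel. 2 * (tanh (p * y) * (r y)\<^sup>2)) \<le> B" if x: "0 \<le> x" for x
  proof -
    have i1: "set_integrable lborel {0..x} (\<lambda>y. 2 * (r y * u y))" using sub[OF iru x] by simp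
    have i2: "set_integrable lborel {0..x} (\<lambda>y. 2 * (tanh (p * y) * (r y)\<^sup>2))" using sub[OF itr x] by simp
    have "(r x)\<^sup>2 = (LINT y:{0..x}|lborel. 2 * (r y * u y)) - (LINT y:{0..x}|lborel. 2 * (tanh (p * y) * (r y)\<^sup>2))"
      using rr[OF x] set_integral_diff(2)[OF i1 i2] by simp
    moreover have "0 \<le> (r x)\<^sup>2" by simp
    ultimately show ?thesis using b1[OF x] by linarith
  qed
  have rB: "(r x)\<^sup>2 \<le> B" if x: "0 \<le> x" for x
  proof -
    have i1: "set_integrable lborel {0..x} (\<lambda>y. 2 * (r y * u y))" using sub[OF iru x] by simp
    have i2: "set_integrable lborel {0..x} (\<lambda>y. 2 * (tanh (p * y) * (r y)\<^sup>2))" using sub[OF itr x] by simp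
    have "(LINT y:{0..x}|lborel. (0::real)) \<le> (LINT y:{0..x}|lborel. 2 * (tanh (p * y) * (r y)\<^sup>2))"
      by (rule set_integral_mono[OF _ i2]) (use p in \<open>auto simp: set_integrable_def intro!: mult_nonneg_nonneg\<close>)
    then have "0 \<le> (LINT y:{0..x}|lborel. 2 * (tanh (p * y) * (r y)\<^sup>2))" by simp
    then show ?thesis using rr[OF x] set_integral_diff(2)[OF i1 i2] b1[OF x] by linarith
  qed
  have itr2: "set_integrable lborel {0..} (\<lambda>y. 2 * (tanh (p * y) * (r y)\<^sup>2))" using itr by simp
  have b3: "(LINT y:{0..}|lborel. 2 * (tanh (p * y) * (r y)\<^sup>2)) \<le> B"
  proof (rule tendsto_upperbound[OF tendsto_set_lebesgue_integral_at_top[OF _ itr2]])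
    show "\<forall>\<^sub>F x in at_top. (LINT y:{0..x}|lborel. 2 * (tanh (p * y) * (r y)\<^sup>2)) \<le> B"
      unfolding eventually_at_top_linorder by (intro exI[of _ 0] allI impI b2)
  qed auto
  define a where "a = 1 / p"
  have a: "0 < a" unfolding a_def using p by simp
  have pw: "(r y)\<^sup>2 \<le> B * indicator {0..a} y + (2 * (tanh (p * y) * (r y)\<^sup>2)) / (2 * tanh 1)"
    if y: "0 \<le> y" for y
  proof (cases "y \<le> a")
    case True
    have "0 \<le> (2 * (tanh (p * y) * (r y)\<^sup>2)) / (2 * tanh 1)" using y p T1 by simp
    then show ?thesis using rB[OF y] True y by simp
  next
    case False
    then have "1 \<le> p * y" using p unfolding a_def by (simp add: field_simps)
    then have "tanh 1 \<le> tanh (p * y)" by simp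
    then have "tanh 1 * (r y)\<^sup>2 \<le> tanh (p * y) * (r y)\<^sup>2" by (intro mult_right_mono) auto
    then have "(r y)\<^sup>2 \<le> (2 * (tanh (p * y) * (r y)\<^sup>2)) / (2 * tanh 1)"
      using T1 by (simp add: field_simps)
    then show ?thesis using False by simp
  qed
  have iind: "set_integrable lborel {0..} (\<lambda>y. B * indicator {0..a} y)"
    unfolding set_integrable_def
  proof -
    have "(\<lambda>y. indicator {0..} y *\<^sub>R (B * indicator {0..a} y)) = (\<lambda>y. indicator {0..a} y *\<^sub>R B)"
      by (auto simp: indicator_def fun_eq_iff)
    moreover have "integrable lborel (\<lambda>y::real. indicator {0..a} y *\<^sub>R B)"
      using borel_integrable_atLeastAtMost'[of 0 a "\<lambda>_. B"] unfolding set_integrable_def by simp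
    ultimately show "integrable lborel (\<lambda>y. indicator {0..} y *\<^sub>R (B * indicator {0..a} y))" by simp
  qed
  have intind: "(LINT y:{0..}|lborel. B * indicator {0..a} y) = B * a"
  proof -
    have "(\<lambda>y. indicator {0..} y *\<^sub>R (B * indicator {0..a} y)) = (\<lambda>y. indicator {0..a} y *\<^sub>R B)"
      by (auto simp: indicator_def fun_eq_iff)
    then have "(LINT y:{0..}|lborel. B * indicator {0..a} y) = (LINT y:{0..a}|lborel. B)"
      unfolding set_lebesgue_integral_def by simp
    also have "\<dots> = B * a" using const_interval_integral[of 0 a B] a by simp
    finally show ?thesis .
  qed
  have iP: "set_integrable lborel {0..} (\<lambda>y. B * indicator {0..a} y + (2 * (tanh (p * y) * (r y)\<^sup>2)) / (2 * tanh 1))"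
    using iind itr2 by (intro set_integral_add(1)) auto
  have "R \<le> (LINT y:{0..}|lborel. B * indicator {0..a} y + (2 * (tanh (p * y) * (r y)\<^sup>2)) / (2 * tanh 1))"
    unfolding R_def by (rule set_integral_mono[OF ir iP]) (use pw in auto)
  also have "\<dots> = B * a + (LINT y:{0..}|lborel. 2 * (tanh (p * y) * (r y)\<^sup>2)) / (2 * tanh 1)"
    using iind itr2 intind by (simp add: set_integral_add(2))
  also have "\<dots> \<le> B * a + B / (2 * tanh 1)"
    using divide_right_mono[OF b3, of "2 * tanh 1"] T1 by linarith
  also have "\<dots> = M * B" unfolding M_def a_def by (simp add: field_simps)
  also have "\<dots> = R / 2 + 2 * M\<^sup>2 * U"
    unfolding B_def e_def using M by (simp add: field_simps power2_eq_square)
  finally have "R \<le> 4 * M\<^sup>2 * U" by simp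
  then show ?thesis unfolding R_def U_def M_def .
qed



lemma exp_int_c: "set_integrable lborel {0..} (\<lambda>x::real. c * exp (- x))"
  using exp_int by simp

lemma phi_sq_bound:
  assumes p: "0 < p" and x: "0 \<le> x"
  shows "(phi p x)\<^sup>2 \<le> (exp (ln 2 / p))\<^sup>2 * exp (- x)"
proof -
  have "(phi p x)\<^sup>2 \<le> (exp (ln 2 / p) * exp (- x))\<^sup>2"
    using phi_bound[OF p x] phi_pos[OF p, of x] by (intro power_mono) auto
  also have "\<dots> = (exp (ln 2 / p))\<^sup>2 * (exp (- x) * exp (- x))"
    by (simp add: power2_eq_square)
  also have "\<dots> \<le> (exp (ln 2 / p))\<^sup>2 * exp (- x)"
    using x by (intro mult_left_mono) auto
  finally show ?thesis .
qed

lemma xsq_exp: "0 \<le> (x::real) \<Longrightarrow> x\<^sup>2 * exp (- x) \<le> 2"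
proof -
  assume x: "0 \<le> x"
  have "x\<^sup>2 / 2 \<le> exp x" using exp_lower_Taylor_quadratic[OF x] x by simp
  then have "x\<^sup>2 \<le> 2 * exp x" by simp
  then have "x\<^sup>2 * exp (- x) \<le> 2 * exp x * exp (- x)" by (intro mult_right_mono) auto
  also have "\<dots> = 2" by (simp add: exp_minus)
  finally show ?thesis .
qed

lemma xphi_sq_bound:
  assumes p: "0 < p" and x: "0 \<le> x"
  shows "(x * tanh (p * x) * phi p x)\<^sup>2 \<le> 2 * (exp (ln 2 / p))\<^sup>2 * exp (- x)"
proof -
  have t: "(tanh (p * x))\<^sup>2 \<le> 1" using tanh_abs[of "p*x"] by (simp add: abs_square_le_1)
  have "(x * tanh (p * x) * phi p x)\<^sup>2 = x\<^sup>2 * (tanh (p * x))\<^sup>2 * (phi p x)\<^sup>2"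
    by (simp add: power_mult_distrib)
  also have "\<dots> \<le> x\<^sup>2 * 1 * (phi p x)\<^sup>2"
    using t by (intro mult_right_mono mult_left_mono) auto
  also have "\<dots> \<le> x\<^sup>2 * ((exp (ln 2 / p) * exp (- x))\<^sup>2)"
    using phi_bound[OF p x] phi_pos[OF p, of x] by (auto intro!: mult_left_mono power_mono)
  also have "\<dots> = (exp (ln 2 / p))\<^sup>2 * (x\<^sup>2 * exp (- x)) * exp (- x)"
    by (simp add: power2_eq_square)
  also have "\<dots> \<le> (exp (ln 2 / p))\<^sup>2 * 2 * exp (- x)"
    using xsq_exp[OF x] by (intro mult_right_mono mult_left_mono) auto
  finally show ?thesis by simp
qed

lemma phi_cont_on: "0 < p \<Longrightarrow> continuous_on UNIV (phi p)"
  using phi_isCont continuous_at_imp_continuous_on by blast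

lemma L2_phi:
  assumes p: "0 < p"
  shows "L2_halfline (phi p)"
proof -
  have m: "set_borel_measurable lborel {0..} (phi p)"
    by (rule sbm_cont[OF phi_cont_on[OF p]]) simp
  have "set_integrable lborel {0..} (\<lambda>x. (phi p x)\<^sup>2)"
  proof (rule si_bound[OF exp_int_c])
    show "set_borel_measurable lborel {0..} (\<lambda>x. (phi p x)\<^sup>2)"
      unfolding power2_eq_square by (rule sbm_mult[OF m m])
    fix x :: real assume "x \<in> {0..}"
    then show "\<bar>(phi p x)\<^sup>2\<bar> \<le> (exp (ln 2 / p))\<^sup>2 * exp (- x)"
      using phi_sq_bound[OF p] by simp
  qed
  then show ?thesis using m unfolding L2_halfline_def by simp
qed

lemma L2_xphi:
  assumes p: "0 < p"
  shows "L2_halfline (\<lambda>x. x * tanh (p * x) * phi p x)"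
proof -
  have c: "continuous_on UNIV (\<lambda>x. x * tanh (p * x) * phi p x)"
    by (intro continuous_intros tanh_cont phi_cont_on[OF p])
  have m: "set_borel_measurable lborel {0..} (\<lambda>x. x * tanh (p * x) * phi p x)"
    by (rule sbm_cont[OF c]) simp
  have "set_integrable lborel {0..} (\<lambda>x. (x * tanh (p * x) * phi p x)\<^sup>2)"
  proof (rule si_bound[OF exp_int_c])
    show "set_borel_measurable lborel {0..} (\<lambda>x. (x * tanh (p * x) * phi p x)\<^sup>2)"
      unfolding power2_eq_square by (rule sbm_mult[OF m m])
    fix x :: real assume "x \<in> {0..}"
    then show "\<bar>(x * tanh (p * x) * phi p x)\<^sup>2\<bar> \<le> (2 * (exp (ln 2 / p))\<^sup>2) * exp (- x)"
      using xphi_sq_bound[OF p] by simp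
  qed
  then show ?thesis using m unfolding L2_halfline_def by simp
qed

lemma dPhi_fun: "0 < p \<Longrightarrow> dPhi p = (\<lambda>x. 1 / (2 * p) * phi p x - 1 / 2 * (x * tanh (p * x) * phi p x))"
  by (rule ext) (simp add: dPhi_eq)

lemma L2_psi:
  assumes p: "0 < p"
  shows "L2_halfline (dPhi p)"
  unfolding dPhi_fun[OF p]
  by (intro L2_diff L2_cmult L2_phi L2_xphi p)

lemma cont_isCont: "continuous_on UNIV f \<Longrightarrow> isCont f x"
  using continuous_on_eq_continuous_at[OF open_UNIV] by blast

lemma exp_minus_tendsto: "((\<lambda>x::real. exp (- x)) \<longlongrightarrow> 0) at_top"
  by (rule filterlim_compose[OF exp_at_bot filterlim_uminus_at_bot_at_top])

lemma phi_sq_pos: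
  assumes p: "0 < p"
  shows "0 < (LINT x:{0..}|lborel. (phi p x)\<^sup>2)"
proof -
  define c0 where "c0 = (exp (- ln (cosh p) / p))\<^sup>2"
  have c0: "0 < c0" unfolding c0_def by simp
  have iA: "set_integrable lborel {0..} (\<lambda>x. (phi p x)\<^sup>2)" using L2_phi[OF p] unfolding L2_halfline_def by simp
  have lb: "c0 \<le> (phi p x)\<^sup>2" if x: "x \<in> {0..1}" for x
  proof -
    have "cosh (p * x) \<le> cosh p"
      using x p by (subst cosh_real_nonneg_le_iff) (auto simp: mult_le_cancel_left1)
    then have "ln (cosh (p * x)) \<le> ln (cosh p)" by simp
    then have "- ln (cosh p) / p \<le> - ln (cosh (p * x)) / p" using p by (simp add: divide_right_mono)
    then have "exp (- ln (cosh p) / p) \<le> phi p x" using phi_exp[OF p] by simp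
    then show ?thesis unfolding c0_def by (intro power_mono) auto
  qed
  have cc: "(LINT x::real:{0..1}|lborel. c0) = c0" using const_interval_integral[of 0 1 c0] by simp
  have "(LINT x::real:{0..1}|lborel. c0) \<le> (LINT x:{0..1}|lborel. (phi p x)\<^sup>2)"
  proof (rule set_integral_mono)
    show "set_integrable lborel {0..1} (\<lambda>x::real. c0)" by (rule borel_integrable_atLeastAtMost') simp
    show "set_integrable lborel {0..1} (\<lambda>x. (phi p x)\<^sup>2)" by (rule set_integrable_subset[OF iA]) auto
  qed (rule lb)
  also have "\<dots> \<le> (LINT x:{0..}|lborel. (phi p x)\<^sup>2)"
    by (rule set_integral_subset_mono[OF iA]) auto
  finally show ?thesis using c0 cc by simp
qed

lemma alpha_eq:
  assumes p: "0 < p"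
  shows "(LINT x:{0..}|lborel. phi p x * dPhi p x) = (1 / (2 * p) - 1 / 4) * (LINT x:{0..}|lborel. (phi p x)\<^sup>2)"
proof -
  define A where "A = (LINT x:{0..}|lborel. (phi p x)\<^sup>2)"
  define Bi where "Bi = (LINT x:{0..}|lborel. (x * tanh (p * x) * phi p x) * phi p x)"
  have iA: "set_integrable lborel {0..} (\<lambda>x. (phi p x)\<^sup>2)" using L2_phi[OF p] unfolding L2_halfline_def by simp
  have iB: "set_integrable lborel {0..} (\<lambda>x. (x * tanh (p * x) * phi p x) * phi p x)"
    by (rule L2_prod[OF L2_xphi[OF p] L2_phi[OF p]])
  define f where "f x = (phi p x)\<^sup>2 - 2 * ((x * tanh (p * x) * phi p x) * phi p x)" for x
  have if': "set_integrable lborel {0..} f" unfolding f_def using iA iB by (intro set_integral_diff(1)) auto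
  have intf: "(LINT x:{0..}|lborel. f x) = A - 2 * Bi"
    unfolding f_def A_def Bi_def using iA iB by (simp add: set_integral_diff(2))
  have D: "DERIV (\<lambda>x. x * (phi p x)\<^sup>2) x :> f x" for x
  proof -
    have "DERIV (\<lambda>x. x * (phi p x * phi p x)) x :>
      1 * (phi p x * phi p x) + (- (tanh (p * x) * phi p x) * phi p x + - (tanh (p * x) * phi p x) * phi p x) * x"
      by (rule DERIV_mult[OF DERIV_ident DERIV_mult[OF phi_deriv[OF p] phi_deriv[OF p]]])
    then show ?thesis unfolding f_def by (simp add: power2_eq_square algebra_simps)
  qed
  have C: "isCont f x" for x
    unfolding f_def by (intro cont_isCont continuous_intros tanh_cont phi_cont_on[OF p])
  have Af: "AC (\<lambda>x. x * (phi p x)\<^sup>2) f" by (rule AC_smooth[OF D C])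
  have Bd: "X * (phi p X)\<^sup>2 = (LINT x:{0..X}|lborel. f x)" if X: "0 \<le> X" for X
    using AC_eq[OF Af X] by simp
  have lim1: "((\<lambda>X. LINT x:{0..X}|lborel. f x) \<longlongrightarrow> (LINT x:{0..}|lborel. f x)) at_top"
    by (rule tendsto_set_lebesgue_integral_at_top[OF _ if']) simp
  have lim1': "((\<lambda>X. X * (phi p X)\<^sup>2) \<longlongrightarrow> (LINT x:{0..}|lborel. f x)) at_top"
  proof (rule Lim_transform_eventually[OF lim1])
    show "\<forall>\<^sub>F X in at_top. (LINT x:{0..X}|lborel. f x) = X * (phi p X)\<^sup>2"
      unfolding eventually_at_top_linorder by (intro exI[of _ 0] allI impI Bd[symmetric])
  qed
  define K where "K = exp (ln 2 / p)"
  have lim2: "((\<lambda>X. X * (phi p X)\<^sup>2) \<longlongrightarrow> 0) at_top"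
  proof (rule tendsto_sandwich[of "\<lambda>_. 0" _ _ "\<lambda>X. K\<^sup>2 * exp (- X)"])
    show "\<forall>\<^sub>F X in at_top. 0 \<le> X * (phi p X)\<^sup>2"
      unfolding eventually_at_top_linorder by (intro exI[of _ 0]) auto
    show "\<forall>\<^sub>F X in at_top. X * (phi p X)\<^sup>2 \<le> K\<^sup>2 * exp (- X)"
      unfolding eventually_at_top_linorder
    proof (intro exI[of _ 0] allI impI)
      fix X :: real assume X: "0 \<le> X"
      have "(phi p X)\<^sup>2 \<le> (K * exp (- X))\<^sup>2"
        using phi_bound[OF p X] phi_pos[OF p, of X] unfolding K_def by (intro power_mono) auto
      then have "X * (phi p X)\<^sup>2 \<le> X * (K * exp (- X))\<^sup>2" using X by (intro mult_left_mono) auto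
      also have "\<dots> = K\<^sup>2 * (X * exp (- X)) * exp (- X)" by (simp add: power2_eq_square)
      also have "\<dots> \<le> K\<^sup>2 * 1 * exp (- X)"
      proof -
        have "X \<le> exp X" using exp_ge_add_one_self[of X] by linarith
        then have "X * exp (- X) \<le> exp X * exp (- X)" by (intro mult_right_mono) auto
        then have "X * exp (- X) \<le> 1" by (simp add: exp_minus)
        then show ?thesis by (intro mult_right_mono mult_left_mono) auto
      qed
      finally show "X * (phi p X)\<^sup>2 \<le> K\<^sup>2 * exp (- X)" by simp
    qed
    show "((\<lambda>X. K\<^sup>2 * exp (- X)) \<longlongrightarrow> 0) at_top"
      using tendsto_mult_left[OF exp_minus_tendsto, of "K\<^sup>2"] by simp
  qed simp
  have "(LINT x:{0..}|lborel. f x) = 0" by (rule tendsto_unique[OF _ lim1' lim2]) simp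
  then have BA: "Bi = A / 2" using intf by simp
  have "(LINT x:{0..}|lborel. phi p x * dPhi p x) =
     (LINT x:{0..}|lborel. 1 / (2 * p) * (phi p x)\<^sup>2 - 1 / 2 * ((x * tanh (p * x) * phi p x) * phi p x))"
    by (rule sli_cong) (auto simp: dPhi_fun[OF p] power2_eq_square algebra_simps)
  also have "\<dots> = 1 / (2 * p) * A - 1 / 2 * Bi"
    unfolding A_def Bi_def using iA iB by (simp add: set_integral_diff(2))
  finally show ?thesis unfolding BA A_def by (simp add: algebra_simps)
qed



lemma sq_bound:
  fixes X a b :: real
  assumes a: "0 \<le> a" and b: "0 \<le> b" and H: "\<And>l. 0 < l \<Longrightarrow> \<bar>X\<bar> \<le> (l * a + b / l) / 2"
  shows "X\<^sup>2 \<le> a * b"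
proof (cases "a = 0 \<or> b = 0")
  case True
  have "X = 0"
  proof (rule ccontr)
    assume X: "X \<noteq> 0"
    then have Xp: "0 < \<bar>X\<bar>" by simp
    show False
    proof (cases "a = 0")
      case True
      define l where "l = (b + 1) / \<bar>X\<bar>"
      have l: "0 < l" unfolding l_def using b Xp by simp
      have "\<bar>X\<bar> \<le> (b / l) / 2" using H[OF l] True by simp
      also have "(b / l) / 2 = b * \<bar>X\<bar> / (2 * (b + 1))" unfolding l_def using Xp b by (simp add: field_simps)
      also have "\<dots> < \<bar>X\<bar>" using Xp b by (simp add: field_simps add_nonneg_pos)
      finally show False by simp
    next
      case False
      with \<open>a = 0 \<or> b = 0\<close> have b0: "b = 0" by simp
      define l where "l = \<bar>X\<bar> / (a + 1)"
      have l: "0 < l" unfolding l_def using a Xp by simp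
      have "\<bar>X\<bar> \<le> (l * a) / 2" using H[OF l] b0 by simp
      also have "(l * a) / 2 = \<bar>X\<bar> * a / (2 * (a + 1))" unfolding l_def using Xp a by (simp add: field_simps)
      also have "\<dots> < \<bar>X\<bar>" using Xp a by (simp add: field_simps add_nonneg_pos)
      finally show False by simp
    qed
  qed
  then show ?thesis using a b by simp
next
  case False
  then have ap: "0 < a" and bp: "0 < b" using a b by auto
  define l where "l = sqrt b / sqrt a"
  have l: "0 < l" unfolding l_def using ap bp by simp
  have "l * a = sqrt a * sqrt b"
    unfolding l_def using ap by (simp add: field_simps)
  moreover have "b / l = sqrt a * sqrt b"
    unfolding l_def using ap bp by (simp add: field_simps)
  ultimately have "\<bar>X\<bar> \<le> sqrt a * sqrt b" using H[OF l] by simp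
  then have "\<bar>X\<bar>\<^sup>2 \<le> (sqrt a * sqrt b)\<^sup>2" by (intro power_mono) auto
  then show ?thesis using a b by (simp add: power_mult_distrib)
qed

lemma sli_nonneg_sq: "0 \<le> (LINT x:A|lborel. (f x :: real)\<^sup>2)"
  unfolding set_lebesgue_integral_def by (intro integral_nonneg_AE AE_I2) (auto simp: indicator_def)

lemma half_le: "- (2 * (y::real)) \<le> S \<Longrightarrow> - (S / 2) \<le> y"
  by linarith

lemma AC_phi: "0 < p \<Longrightarrow> AC (phi p) (\<lambda>x. - (tanh (p * x) * phi p x))"
  by (rule AC_smooth[OF phi_deriv]) (auto intro!: cont_isCont continuous_intros tanh_cont phi_cont_on)

lemma edge_all:
  fixes w g :: "real \<Rightarrow> real"
  assumes p: "0 < p" and H: "H1_halfline_deriv w g" and w0: "w 0 = c"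
  shows "(LINT x:{0..}|lborel. (g x)\<^sup>2 + (w x)\<^sup>2 - (p + 1) * phi p x powr (2 * p) * (w x)\<^sup>2) =
         (LINT x:{0..}|lborel. (g x + tanh (p * x) * w x)\<^sup>2)" (is ?Q)
    and "(LINT x:{0..}|lborel. (w x - c * phi p x)\<^sup>2) \<le>
          4 * (1 / p + 1 / (2 * tanh 1))\<^sup>2 * (LINT x:{0..}|lborel. (g x + tanh (p * x) * w x)\<^sup>2)" (is ?E)
    and "(LINT x:{0..}|lborel. w x * dPhi p x) = c * (LINT x:{0..}|lborel. phi p x * dPhi p x) +
          (LINT x:{0..}|lborel. (w x - c * phi p x) * dPhi p x)" (is ?O)
    and "\<And>l. 0 < l \<Longrightarrow> \<bar>LINT x:{0..}|lborel. (w x - c * phi p x) * dPhi p x\<bar> \<le>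
          (l * (LINT x:{0..}|lborel. (w x - c * phi p x)\<^sup>2) + (LINT x:{0..}|lborel. (dPhi p x)\<^sup>2) / l) / 2"
    and "(LINT x:{0..}|lborel. (g x)\<^sup>2 + (w x)\<^sup>2) \<le>
          2 * (LINT x:{0..}|lborel. (g x + tanh (p * x) * w x)\<^sup>2) + 6 * c\<^sup>2 * (LINT x:{0..}|lborel. (phi p x)\<^sup>2)
          + 6 * (LINT x:{0..}|lborel. (w x - c * phi p x)\<^sup>2)" (is ?H)
proof -
  define r where "r x = w x - c * phi p x" for x
  define u where "u x = g x + tanh (p * x) * w x" for x
  define k where "k x = g x - c * - (tanh (p * x) * phi p x)" for x
  have Lw: "L2_halfline w" and Lg: "L2_halfline g" using H unfolding H1_halfline_deriv_def by auto
  have Lphi: "L2_halfline (phi p)" by (rule L2_phi[OF p])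
  have Lpsi: "L2_halfline (dPhi p)" by (rule L2_psi[OF p])
  have Lr: "L2_halfline r" unfolding r_def by (intro L2_diff L2_cmult Lw Lphi)
  have Lu: "L2_halfline u" unfolding u_def by (rule edge_identity(2)[OF p H])
  show ?Q by (rule edge_identity(3)[OF p H])
  have Ar: "AC r k"
    unfolding r_def k_def
    by (intro AC_diff AC_cmult H1_AC[OF H] AC_phi[OF p])
  have r0: "r 0 = 0" unfolding r_def using w0 phi_0[OF p] by simp
  have ku: "k x = u x - tanh (p * x) * r x" for x
    unfolding k_def u_def r_def by (simp add: algebra_simps)
  show ?E using energy[OF p Ar r0 Lr Lu ku] unfolding r_def u_def .
  have ipp: "set_integrable lborel {0..} (\<lambda>x. phi p x * dPhi p x)" by (rule L2_prod[OF Lphi Lpsi])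
  have irp: "set_integrable lborel {0..} (\<lambda>x. r x * dPhi p x)" by (rule L2_prod[OF Lr Lpsi])
  have "(LINT x:{0..}|lborel. w x * dPhi p x) = (LINT x:{0..}|lborel. c * (phi p x * dPhi p x) + r x * dPhi p x)"
    by (rule sli_cong) (auto simp: r_def algebra_simps)
  also have "\<dots> = (LINT x:{0..}|lborel. c * (phi p x * dPhi p x)) + (LINT x:{0..}|lborel. r x * dPhi p x)"
    by (rule set_integral_add(2)) (use ipp irp in auto)
  finally show ?O unfolding r_def by simp
  have ir: "set_integrable lborel {0..} (\<lambda>x. (r x)\<^sup>2)" using Lr unfolding L2_halfline_def by simp
  have ips: "set_integrable lborel {0..} (\<lambda>x. (dPhi p x)\<^sup>2)" using Lpsi unfolding L2_halfline_def by simp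
  show "\<bar>LINT x:{0..}|lborel. (w x - c * phi p x) * dPhi p x\<bar> \<le>
          (l * (LINT x:{0..}|lborel. (w x - c * phi p x)\<^sup>2) + (LINT x:{0..}|lborel. (dPhi p x)\<^sup>2) / l) / 2"
    if l: "0 < l" for l
  proof -
    define b where "b x = (l * (r x)\<^sup>2 + (dPhi p x)\<^sup>2 / l) / 2" for x
    have ib: "set_integrable lborel {0..} b"
      unfolding b_def using ir ips by (intro set_integrable_divide set_integral_add(1)) auto
    have intb: "(LINT x:{0..}|lborel. b x) = (l * (LINT x:{0..}|lborel. (r x)\<^sup>2) + (LINT x:{0..}|lborel. (dPhi p x)\<^sup>2) / l) / 2"
      unfolding b_def using ir ips by (simp add: set_integral_add(2))
    have pw1: "r x * dPhi p x \<le> b x" for x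
      unfolding b_def using amgm[OF l, of "r x" "dPhi p x"] by simp
    have pw2: "- b x \<le> r x * dPhi p x" for x
    proof -
      have "- (2 * (r x * dPhi p x)) \<le> l * (r x)\<^sup>2 + (dPhi p x)\<^sup>2 / l"
        using amgm[OF l, of "- r x" "dPhi p x"] by (simp add: algebra_simps)
      then show ?thesis unfolding b_def by (rule half_le)
    qed
    have i1: "(LINT x:{0..}|lborel. r x * dPhi p x) \<le> (LINT x:{0..}|lborel. b x)"
      by (rule set_integral_mono[OF irp ib pw1])
    have imb: "set_integrable lborel {0..} (\<lambda>x. - b x)" using ib by (simp add: set_integrable_def)
    have "(LINT x:{0..}|lborel. - b x) \<le> (LINT x:{0..}|lborel. r x * dPhi p x)"
      by (rule set_integral_mono[OF imb irp pw2])
    then have i2: "- (LINT x:{0..}|lborel. b x) \<le> (LINT x:{0..}|lborel. r x * dPhi p x)"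
      using set_integral_uminus[OF ib] by simp
    have A1: "\<bar>LINT x:{0..}|lborel. r x * dPhi p x\<bar> \<le> (LINT x:{0..}|lborel. b x)"
      unfolding abs_le_iff using i1 i2 by linarith
    show ?thesis using A1 unfolding intb r_def .
  qed
  have iw: "set_integrable lborel {0..} (\<lambda>x. (w x)\<^sup>2)" using Lw unfolding L2_halfline_def by simp
  have ig: "set_integrable lborel {0..} (\<lambda>x. (g x)\<^sup>2)" using Lg unfolding L2_halfline_def by simp
  have iu: "set_integrable lborel {0..} (\<lambda>x. (u x)\<^sup>2)" using Lu unfolding L2_halfline_def by simp
  have iph: "set_integrable lborel {0..} (\<lambda>x. (phi p x)\<^sup>2)" using Lphi unfolding L2_halfline_def by simp
  have igw: "set_integrable lborel {0..} (\<lambda>x. (g x)\<^sup>2 + (w x)\<^sup>2)" using ig iw by (rule set_integral_add(1))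
  define hb where "hb x = 2 * (u x)\<^sup>2 + 6 * c\<^sup>2 * (phi p x)\<^sup>2 + 6 * (r x)\<^sup>2" for x
  have ihb: "set_integrable lborel {0..} hb"
    unfolding hb_def using iu iph ir by (intro set_integral_add(1)) auto
  have pw: "(g x)\<^sup>2 + (w x)\<^sup>2 \<le> hb x" for x
  proof -
    have t2: "(tanh (p * x))\<^sup>2 \<le> 1" using tanh_abs[of "p * x"] by (simp add: abs_square_le_1)
    have g: "g x = u x - tanh (p * x) * w x" unfolding u_def by simp
    have ww: "w x = c * phi p x + r x" unfolding r_def by simp
    have "(g x)\<^sup>2 \<le> 2 * (u x)\<^sup>2 + 2 * (tanh (p * x) * w x)\<^sup>2"
      unfolding g using zero_le_power2[of "u x + tanh (p * x) * w x"]
      by (simp add: power2_eq_square algebra_simps)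
    also have "(tanh (p * x) * w x)\<^sup>2 \<le> (w x)\<^sup>2"
      using mult_right_mono[OF t2, of "(w x)\<^sup>2"] by (simp add: power_mult_distrib)
    finally have gb: "(g x)\<^sup>2 \<le> 2 * (u x)\<^sup>2 + 2 * (w x)\<^sup>2" by simp
    have wb: "(w x)\<^sup>2 \<le> 2 * (c * phi p x)\<^sup>2 + 2 * (r x)\<^sup>2"
      unfolding ww using zero_le_power2[of "c * phi p x - r x"]
      by (simp add: power2_eq_square algebra_simps)
    show ?thesis using gb wb unfolding hb_def by (simp add: power_mult_distrib)
  qed
  have "(LINT x:{0..}|lborel. (g x)\<^sup>2 + (w x)\<^sup>2) \<le> (LINT x:{0..}|lborel. hb x)"
    by (rule set_integral_mono[OF igw ihb pw])
  also have "(LINT x:{0..}|lborel. hb x) = 2 * (LINT x:{0..}|lborel. (u x)\<^sup>2) + 6 * c\<^sup>2 * (LINT x:{0..}|lborel. (phi p x)\<^sup>2)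
          + 6 * (LINT x:{0..}|lborel. (r x)\<^sup>2)"
    unfolding hb_def using iu iph ir by (simp add: set_integral_add(2))
  finally show ?H unfolding u_def r_def .
qed



theorem lemma5p5:
  fixes N :: nat and p :: real
  assumes "N \<ge> 3" and "0 < p" and "p < 2"
  shows "\<exists>C>0. \<forall>W W'. H1_Gamma_deriv N W W' \<longrightarrow>
           L2_inner N W (\<lambda>j. dPhi p) = 0 \<longrightarrow>
           Lminus_form p N W W' \<ge> C * H1_norm_sq N W W'"
proof -
  have p: "0 < p" using assms by simp
  define K1 where "K1 = 4 * (1 / p + 1 / (2 * tanh 1))\<^sup>2"
  define A where "A = (LINT x:{0..}|lborel. (phi p x)\<^sup>2)"
  define Ps where "Ps = (LINT x:{0..}|lborel. (dPhi p x)\<^sup>2)"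
  define al where "al = (LINT x:{0..}|lborel. phi p x * dPhi p x)"
  have A: "0 < A" unfolding A_def by (rule phi_sq_pos[OF p])
  have Ps: "0 \<le> Ps" unfolding Ps_def by (rule sli_nonneg_sq)
  have K1: "0 \<le> K1" unfolding K1_def by simp
  have al_eq: "al = (1 / (2 * p) - 1 / 4) * A" unfolding al_def A_def by (rule alpha_eq[OF p])
  have "1 / 4 < 1 / (2 * p)" using assms by (simp add: field_simps)
  then have f: "1 / (2 * p) - 1 / 4 \<noteq> 0" by linarith
  have al: "al \<noteq> 0" unfolding al_eq using f A by simp
  then have al2: "0 < al\<^sup>2" by simp
  define D where "D = 2 + 6 * K1 * (1 + A * Ps / al\<^sup>2)"
  have D: "0 < D" unfolding D_def using K1 A Ps al2 by (simp add: add_pos_nonneg)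
  show ?thesis
  proof (intro exI[of _ "1 / D"] conjI allI impI)
    show "0 < 1 / D" using D by simp
    fix W W' assume H: "H1_Gamma_deriv N W W'" and orth: "L2_inner N W (\<lambda>j. dPhi p) = 0"
    define c where "c = W 0 0"
    have N0: "0 < N" using assms by simp
    have Hj: "H1_halfline_deriv (W j) (W' j)" if "j < N" for j
      using H that unfolding H1_Gamma_deriv_def by blast
    have cj: "W j 0 = c" if "j < N" for j
      using H that N0 unfolding H1_Gamma_deriv_def c_def by blast
    define U where "U j = (LINT x:{0..}|lborel. (W' j x + tanh (p * x) * W j x)\<^sup>2)" for j
    define R where "R j = (LINT x:{0..}|lborel. (W j x - c * phi p x)\<^sup>2)" for j
    define S where "S j = (LINT x:{0..}|lborel. (W j x - c * phi p x) * dPhi p x)" for j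
    have EQ: "Lminus_form p N W W' = (\<Sum>j<N. U j)"
      unfolding Lminus_form_def U_def
      by (rule sum.cong[OF refl]) (rule edge_all(1)[OF p Hj cj], simp_all)
    have ER: "R j \<le> K1 * U j" if j: "j < N" for j
      unfolding R_def U_def K1_def by (rule edge_all(2)[OF p Hj[OF j] cj[OF j]])
    have EO: "(LINT x:{0..}|lborel. W j x * dPhi p x) = c * al + S j" if j: "j < N" for j
      unfolding al_def S_def by (rule edge_all(3)[OF p Hj[OF j] cj[OF j]])
    have EB: "\<bar>S j\<bar> \<le> (l * R j + Ps / l) / 2" if j: "j < N" and l: "0 < l" for j l
      unfolding S_def R_def Ps_def by (rule edge_all(4)[OF p Hj[OF j] cj[OF j] l])
    have EH: "(LINT x:{0..}|lborel. (W' j x)\<^sup>2 + (W j x)\<^sup>2) \<le> 2 * U j + 6 * c\<^sup>2 * A + 6 * R j"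
      if j: "j < N" for j
      unfolding U_def A_def R_def by (rule edge_all(5)[OF p Hj[OF j] cj[OF j]])
    have U0: "0 \<le> U j" for j unfolding U_def by (rule sli_nonneg_sq)
    have R0: "0 \<le> R j" for j unfolding R_def by (rule sli_nonneg_sq)
    have sumO: "real N * c * al + (\<Sum>j<N. S j) = 0"
    proof -
      have "0 = (\<Sum>j<N. LINT x:{0..}|lborel. W j x * dPhi p x)"
        using orth unfolding L2_inner_def by simp
      also have "\<dots> = (\<Sum>j<N. c * al + S j)" by (rule sum.cong) (simp_all add: EO)
      also have "\<dots> = real N * c * al + (\<Sum>j<N. S j)" by (simp add: sum.distrib)
      finally show ?thesis by simp
    qed
    have sumB: "\<bar>real N * c * al\<bar> \<le> (l * (\<Sum>j<N. R j) + real N * Ps / l) / 2" if l: "0 < l" for l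
    proof -
      have "\<bar>real N * c * al\<bar> = \<bar>\<Sum>j<N. S j\<bar>" using sumO by (simp add: eq_neg_iff_add_eq_0[symmetric])
      also have "\<dots> \<le> (\<Sum>j<N. \<bar>S j\<bar>)" by (rule sum_abs)
      also have "\<dots> \<le> (\<Sum>j<N. (l * R j + Ps / l) / 2)" by (rule sum_mono) (use EB[OF _ l] in simp)
      also have "\<dots> = (l * (\<Sum>j<N. R j) + real N * Ps / l) / 2"
        by (simp add: sum.distrib sum_distrib_left sum_divide_distrib[symmetric])
      finally show ?thesis .
    qed
    have SR0: "0 \<le> (\<Sum>j<N. R j)" by (intro sum_nonneg R0)
    have "(real N * c * al)\<^sup>2 \<le> (\<Sum>j<N. R j) * (real N * Ps)"
      by (rule sq_bound[OF SR0 _ sumB]) (use Ps in simp)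
    then have "real N * (real N * (c\<^sup>2 * al\<^sup>2)) \<le> real N * ((\<Sum>j<N. R j) * Ps)"
      by (simp add: power_mult_distrib power2_eq_square algebra_simps)
    then have c1: "real N * (c\<^sup>2 * al\<^sup>2) \<le> (\<Sum>j<N. R j) * Ps" using N0 by simp
    have c2: "real N * c\<^sup>2 \<le> (\<Sum>j<N. R j) * Ps / al\<^sup>2"
      using c1 al2 by (simp add: field_simps)
    have SR: "(\<Sum>j<N. R j) \<le> K1 * (\<Sum>j<N. U j)"
      unfolding sum_distrib_left by (rule sum_mono) (simp add: ER)
    have SU0: "0 \<le> (\<Sum>j<N. U j)" by (intro sum_nonneg U0)
    have "H1_norm_sq N W W' \<le> (\<Sum>j<N. 2 * U j + 6 * c\<^sup>2 * A + 6 * R j)"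
      unfolding H1_norm_sq_def by (rule sum_mono) (simp add: EH)
    also have "\<dots> = 2 * (\<Sum>j<N. U j) + 6 * A * (real N * c\<^sup>2) + 6 * (\<Sum>j<N. R j)"
      by (simp add: sum.distrib sum_distrib_left sum_distrib_right algebra_simps)
    also have "\<dots> \<le> 2 * (\<Sum>j<N. U j) + 6 * A * ((\<Sum>j<N. R j) * Ps / al\<^sup>2) + 6 * (\<Sum>j<N. R j)"
    proof -
      have "6 * A * (real N * c\<^sup>2) \<le> 6 * A * ((\<Sum>j<N. R j) * Ps / al\<^sup>2)"
        by (rule mult_left_mono[OF c2]) (use A in simp)
      then show ?thesis by linarith
    qed
    also have "\<dots> = 2 * (\<Sum>j<N. U j) + 6 * (1 + A * Ps / al\<^sup>2) * (\<Sum>j<N. R j)"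
      by (simp add: algebra_simps)
    also have "\<dots> \<le> 2 * (\<Sum>j<N. U j) + 6 * (1 + A * Ps / al\<^sup>2) * (K1 * (\<Sum>j<N. U j))"
      using SR A Ps al2 by (intro add_left_mono mult_left_mono) auto
    also have "\<dots> = D * (\<Sum>j<N. U j)" unfolding D_def by (simp add: algebra_simps)
    finally have "H1_norm_sq N W W' \<le> D * (\<Sum>j<N. U j)" .
    then have "1 / D * H1_norm_sq N W W' \<le> (\<Sum>j<N. U j)"
      using D by (simp add: field_simps)
    then show "1 / D * H1_norm_sq N W W' \<le> Lminus_form p N W W'" unfolding EQ .
  qed
qed


end
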